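(* Let $f^i_m:\mathbb{R}^d\to\mathbb{R}$ ($m\in[M]$, $i\in[n]$) be differentiable and $L$-smooth, with $f_m=\frac1n\sum_i f^i_m$, $f=\frac1M\sum_m f_m$, and suppose $f_*=\inf f$, $f_{*,m}=\inf f_m$, $f^i_{*,m}=\inf f^i_m$ are all finite. Fix $x_t\in\mathbb{R}^d$ and $\gamma\le\frac{1}{2Ln}$. For each $m\in[M]$ let $\pi_m$ be a uniformly random permutation of $[n]$ and define $x^0_{t,m}=x_t$, $x^{i+1}_{t,m}=x^i_{t,m}-\gamma\nabla f_m^{\pi_m^i}(x^i_{t,m})$ for $i=0,\dots,n-1$. Then $$\frac{1}{Mn}\sum_{m=1}^M\sum_{i=0}^{n-1}\mathbb{E}\|x_t-x^i_{t,m}\|^2\le 4\gamma^2n^2L\big(f(x_t)-f_*\big)+2\gamma^2n^2L\Delta_*+2\gamma^2nL\frac1M\sum_{m=1}^M\Delta_{*,m},$$ where the expectation is over the permutations.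
   Context: $[k]=\{1,\dots,k\}$. $L$-smooth: $\|\nabla h(x)-\nabla h(y)\|\le L\|x-y\|$ for all $x,y$. $\Delta_*=f_*-\frac1M\sum_{m=1}^M f_{*,m}$ and $\Delta_{*,m}=f_*-\frac1n\sum_{i=1}^n f^i_{*,m}$. Permutations $\pi_m=(\pi_m^0,\dots,\pi_m^{n-1})$ are indexed from $0$. *)

theory Defs
  imports "HOL-Analysis.Analysis" "HOL-Combinatorics.Permutations"
begin

text \<open>G m j is the gradient of f^j_m.\<close>
primrec rr_iter :: "(nat \<Rightarrow> nat \<Rightarrow> 'a::real_normed_vector \<Rightarrow> 'a) \<Rightarrow> real \<Rightarrow> nat \<Rightarrow> (nat \<Rightarrow> nat) \<Rightarrow> 'a \<Rightarrow> nat \<Rightarrow> 'a"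
  where
    "rr_iter G \<gamma> m p x 0 = x"
  | "rr_iter G \<gamma> m p x (Suc i) = rr_iter G \<gamma> m p x i - \<gamma> *\<^sub>R G m (p i) (rr_iter G \<gamma> m p x i)"

definition perm_expect :: "nat \<Rightarrow> ((nat \<Rightarrow> nat) \<Rightarrow> real) \<Rightarrow> real" where
  "perm_expect n X = (\<Sum>p\<in>{p. p permutes {..<n}}. X p) / real (card {p. p permutes {..<n}})"

end

theory Submission imports Defs begin



lemma descent:
  fixes h :: "'a::euclidean_space \<Rightarrow> real" and g :: "'a \<Rightarrow> 'a"
  assumes d: "\<And>y. (h has_derivative (\<lambda>k. g y \<bullet> k)) (at y)"
    and s: "\<And>y z. norm (g y - g z) \<le> L * norm (y - z)"
  shows "h (y + v) \<le> h y + g y \<bullet> v + L / 2 * (norm v)\<^sup>2"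
proof -
  define \<phi> where "\<phi> t = h (y + t *\<^sub>R v) - t * (g y \<bullet> v) - L / 2 * t\<^sup>2 * (norm v)\<^sup>2" for t
  have D: "(\<phi> has_real_derivative (g (y + t *\<^sub>R v) \<bullet> v - g y \<bullet> v - L * t * (norm v)\<^sup>2)) (at t)" for t
  proof -
    have l: "((\<lambda>t. y + t *\<^sub>R v) has_derivative (\<lambda>s. s *\<^sub>R v)) (at t)"
      by (auto intro!: derivative_eq_intros)
    have c: "((\<lambda>t. h (y + t *\<^sub>R v)) has_derivative (\<lambda>s. g (y + t *\<^sub>R v) \<bullet> (s *\<^sub>R v))) (at t)"
      using has_derivative_compose[OF l d] by simp
    have c2: "((\<lambda>t. h (y + t *\<^sub>R v)) has_real_derivative (g (y + t *\<^sub>R v) \<bullet> v)) (at t)"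
    proof -
      have "(\<lambda>s. g (y + t *\<^sub>R v) \<bullet> (s *\<^sub>R v)) = (*) (g (y + t *\<^sub>R v) \<bullet> v)"
        by (rule ext) (simp add: mult.commute)
      with c show ?thesis by (simp add: has_field_derivative_def)
    qed
    show ?thesis unfolding \<phi>_def
      by (rule derivative_eq_intros c2 | simp)+ (simp add: algebra_simps)?
  qed
  have "\<phi> 1 \<le> \<phi> 0"
  proof (rule DERIV_nonpos_imp_nonincreasing[of 0 1])
    fix t :: real assume t: "0 \<le> t" "t \<le> 1"
    have "g (y + t *\<^sub>R v) \<bullet> v - g y \<bullet> v = (g (y + t *\<^sub>R v) - g y) \<bullet> v" by (simp add: inner_diff_left)
    also have "\<dots> \<le> norm (g (y + t *\<^sub>R v) - g y) * norm v" by (rule norm_cauchy_schwarz)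
    also have "\<dots> \<le> L * norm (t *\<^sub>R v) * norm v" using s[of "y + t *\<^sub>R v" y] by (simp add: mult_right_mono)
    also have "\<dots> = L * t * (norm v)\<^sup>2" using t by (simp add: power2_eq_square)
    finally show "\<exists>y. DERIV \<phi> t :> y \<and> y \<le> 0" using D by (intro exI[of _ _]) (rule conjI, rule D, simp)
  qed simp
  then show ?thesis unfolding \<phi>_def by simp
qed




lemma grad_bound:
  fixes \<phi> :: "'a::real_inner \<Rightarrow> real"
  assumes d: "\<And>v. \<phi> (x + v) \<le> \<phi> x + g \<bullet> v + L / 2 * (norm v)\<^sup>2"
    and b: "bdd_below (range \<phi>)" and L: "L > 0"
  shows "(norm g)\<^sup>2 \<le> 2 * L * (\<phi> x - (INF y. \<phi> y))"
proof -
  define v where "v = (- 1 / L) *\<^sub>R g"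
  have "(INF y. \<phi> y) \<le> \<phi> (x + v)" by (rule cINF_lower[OF b]) simp
  also have "\<dots> \<le> \<phi> x + g \<bullet> v + L / 2 * (norm v)\<^sup>2" by (rule d)
  also have "g \<bullet> v = - (norm g)\<^sup>2 / L" unfolding v_def by (simp add: power2_norm_eq_inner)
  also have "L / 2 * (norm v)\<^sup>2 = (norm g)\<^sup>2 / (2 * L)" unfolding v_def using L
    by (simp add: power2_eq_square field_simps)
  finally have "(INF y. \<phi> y) \<le> \<phi> x - (norm g)\<^sup>2 / (2 * L)" using L by (simp add: field_simps)
  then show ?thesis using L by (simp add: field_simps)
qed

lemma perm_single:
  fixes h :: "nat \<Rightarrow> real"
  assumes "j < n"
  shows "(\<Sum>p\<in>{p. p permutes {..<n}}. h (p j)) = (\<Sum>p\<in>{p. p permutes {..<n}}. h (p 0))"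
proof -
  have s: "Transposition.transpose 0 j permutes {..<n}" using assms by (intro permutes_swap_id) auto
  show ?thesis
    using sum_permutations_compose_right[OF s, of "\<lambda>p. h (p 0)"] by simp
qed

lemma perm_pair:
  fixes h :: "nat \<Rightarrow> nat \<Rightarrow> real"
  assumes "j < n" "k < n" "j \<noteq> k"
  shows "(\<Sum>p\<in>{p. p permutes {..<n}}. h (p j) (p k)) = (\<Sum>p\<in>{p. p permutes {..<n}}. h (p 0) (p 1))"
proof -
  define k' where "k' = Transposition.transpose 0 j k"
  have k'n: "k' < n" using assms unfolding k'_def by (auto simp: Transposition.transpose_def)
  have k'0: "k' \<noteq> 0" using assms unfolding k'_def by (auto simp: Transposition.transpose_def)
  have jk: "Transposition.transpose 0 j k' = k" unfolding k'_def by simp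
  have n2: "1 < n" using assms by auto
  define \<sigma> where "\<sigma> = Transposition.transpose 0 j \<circ> Transposition.transpose 1 k'"
  have s: "\<sigma> permutes {..<n}" unfolding \<sigma>_def using assms k'n n2
    by (intro permutes_compose permutes_swap_id) auto
  have s0: "\<sigma> 0 = j" unfolding \<sigma>_def using k'0 by (simp add: Transposition.transpose_def)
  have s1: "\<sigma> 1 = k" unfolding \<sigma>_def using jk by (simp add: Transposition.transpose_def)
  show ?thesis
    using sum_permutations_compose_right[OF s, of "\<lambda>p. h (p 0) (p 1)"] s0 s1 by simp
qed




lemma norm_sum_sq: "(norm (\<Sum>j\<in>I. v j :: 'a::real_inner))\<^sup>2 = (\<Sum>j\<in>I. \<Sum>k\<in>I. v j \<bullet> v k)"
  unfolding power2_norm_eq_inner inner_sum_left inner_sum_right by (rule sum.swap)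

lemma var_formula:
  fixes g :: "nat \<Rightarrow> 'a::real_inner" and n :: nat
  assumes i: "i \<le> n"
  defines "P \<equiv> {p. p permutes {..<n}}"
  shows "(\<Sum>p\<in>P. (norm (\<Sum>j<i. g (p j)))\<^sup>2)
     = real i * (\<Sum>p\<in>P. g (p 0) \<bullet> g (p 0)) + real i * (real i - 1) * (\<Sum>p\<in>P. g (p 0) \<bullet> g (p 1))"
proof -
  let ?Q = "\<lambda>j k. \<Sum>p\<in>P. g (p j) \<bullet> g (p k)"
  have "(\<Sum>p\<in>P. (norm (\<Sum>j<i. g (p j)))\<^sup>2) = (\<Sum>p\<in>P. \<Sum>j<i. \<Sum>k<i. g (p j) \<bullet> g (p k))"
    by (simp add: norm_sum_sq)
  also have "\<dots> = (\<Sum>j<i. \<Sum>k<i. ?Q j k)"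
    by (rule trans[OF sum.swap], rule sum.cong[OF refl], rule sum.swap)
  also have "\<dots> = (\<Sum>j<i. ?Q 0 0 + (real i - 1) * ?Q 0 1)"
  proof (rule sum.cong[OF refl])
    fix j assume j: "j \<in> {..<i}"
    have "(\<Sum>k<i. ?Q j k) = ?Q j j + (\<Sum>k\<in>{..<i} - {j}. ?Q j k)"
      using j by (simp add: sum.remove)
    also have "?Q j j = ?Q 0 0" unfolding P_def
      using perm_single[of j n "\<lambda>a. g a \<bullet> g a"] j i by simp
    also have "(\<Sum>k\<in>{..<i} - {j}. ?Q j k) = (\<Sum>k\<in>{..<i} - {j}. ?Q 0 1)"
      unfolding P_def using j i by (intro sum.cong refl perm_pair[of j n _ "\<lambda>a b. g a \<bullet> g b"]) auto
    also have "\<dots> = (real i - 1) * ?Q 0 1" using j by (simp add: of_nat_diff)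
    finally show "(\<Sum>k<i. ?Q j k) = ?Q 0 0 + (real i - 1) * ?Q 0 1" .
  qed
  also have "\<dots> = real i * ?Q 0 0 + real i * (real i - 1) * ?Q 0 1"
    by (simp only: sum_constant distrib_left mult.assoc card_lessThan)
  finally show ?thesis .
qed

lemma var_Q0:
  fixes g :: "nat \<Rightarrow> 'a::real_inner" and n :: nat
  defines "P \<equiv> {p. p permutes {..<n}}"
  shows "real n * (\<Sum>p\<in>P. g (p 0) \<bullet> g (p 0)) = real (card P) * (\<Sum>a<n. (norm (g a))\<^sup>2)"
proof -
  have "real n * (\<Sum>p\<in>P. g (p 0) \<bullet> g (p 0)) = (\<Sum>j<n. \<Sum>p\<in>P. g (p j) \<bullet> g (p j))"
  proof -
    have "(\<Sum>j<n. \<Sum>p\<in>P. g (p j) \<bullet> g (p j)) = (\<Sum>j<n. \<Sum>p\<in>P. g (p 0) \<bullet> g (p 0))"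
      unfolding P_def by (intro sum.cong refl perm_single[of _ n "\<lambda>a. g a \<bullet> g a"]) simp
    then show ?thesis by simp
  qed
  also have "\<dots> = (\<Sum>p\<in>P. \<Sum>j<n. g (p j) \<bullet> g (p j))" by (rule sum.swap)
  also have "\<dots> = (\<Sum>p\<in>P. \<Sum>a<n. (norm (g a))\<^sup>2)"
  proof (rule sum.cong[OF refl])
    fix p assume "p \<in> P"
    then have "p permutes {..<n}" by (simp add: P_def)
    from sum.permute[OF this, of "\<lambda>a. (norm (g a))\<^sup>2"]
    show "(\<Sum>j<n. g (p j) \<bullet> g (p j)) = (\<Sum>a<n. (norm (g a))\<^sup>2)"
      by (simp add: o_def power2_norm_eq_inner)
  qed
  also have "\<dots> = real (card P) * (\<Sum>a<n. (norm (g a))\<^sup>2)" by simp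
  finally show ?thesis .
qed

lemma var_full:
  fixes g :: "nat \<Rightarrow> 'a::real_inner" and n :: nat
  defines "P \<equiv> {p. p permutes {..<n}}"
  shows "(\<Sum>p\<in>P. (norm (\<Sum>j<n. g (p j)))\<^sup>2) = real (card P) * (norm (\<Sum>a<n. g a))\<^sup>2"
proof -
  have "(\<Sum>p\<in>P. (norm (\<Sum>j<n. g (p j)))\<^sup>2) = (\<Sum>p\<in>P. (norm (\<Sum>a<n. g a))\<^sup>2)"
  proof (rule sum.cong[OF refl])
    fix p assume "p \<in> P"
    then have "p permutes {..<n}" by (simp add: P_def)
    from sum.permute[OF this, of g]
    show "(norm (\<Sum>j<n. g (p j)))\<^sup>2 = (norm (\<Sum>a<n. g a))\<^sup>2" by (simp add: o_def)
  qed
  then show ?thesis by simp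
qed




lemma iter_diff:
  "x - rr_iter G \<gamma> m p x i = \<gamma> *\<^sub>R (\<Sum>j<i. G m (p j) (rr_iter G \<gamma> m p x j))"
  by (induction i) (simp_all add: algebra_simps scaleR_right_distrib)

lemma sq_sum_le: "(\<Sum>j<i. a j :: real)\<^sup>2 \<le> real i * (\<Sum>j<i. (a j)\<^sup>2)"
  using Cauchy_Schwarz_ineq_sum[of a "\<lambda>_. 1" "{..<i}"] by (simp add: mult.commute)

lemma norm_add_sq: "(norm (u + w :: 'a::real_normed_vector))\<^sup>2 \<le> 2 * (norm u)\<^sup>2 + 2 * (norm w)\<^sup>2"
proof -
  have "norm (u + w) \<le> norm u + norm w" by (rule norm_triangle_ineq)
  then have "(norm (u + w))\<^sup>2 \<le> (norm u + norm w)\<^sup>2" by (simp add: power_mono)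
  also have "\<dots> \<le> 2 * (norm u)\<^sup>2 + 2 * (norm w)\<^sup>2"
    using sum_squares_ge_zero[of "norm u - norm w" 0] by (simp add: power2_eq_square algebra_simps)
  finally show ?thesis .
qed

lemma det_bound:
  fixes G :: "nat \<Rightarrow> nat \<Rightarrow> 'a::real_inner \<Rightarrow> 'a"
  assumes sm: "\<And>a y z. a < n \<Longrightarrow> norm (G m a y - G m a z) \<le> L * norm (y - z)"
    and p: "p permutes {..<n}" and i: "i \<le> n" and L: "L \<ge> 0"
  shows "(norm (x - rr_iter G \<gamma> m p x i))\<^sup>2
     \<le> 2 * \<gamma>\<^sup>2 * L\<^sup>2 * real i * (\<Sum>j<i. (norm (x - rr_iter G \<gamma> m p x j))\<^sup>2)
       + 2 * \<gamma>\<^sup>2 * (norm (\<Sum>j<i. G m (p j) x))\<^sup>2"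
proof -
  let ?X = "rr_iter G \<gamma> m p x"
  define u where "u = (\<Sum>j<i. G m (p j) (?X j) - G m (p j) x)"
  define w where "w = (\<Sum>j<i. G m (p j) x)"
  have eq: "x - ?X i = \<gamma> *\<^sub>R (u + w)"
    unfolding iter_diff u_def w_def by (simp add: sum_subtractf)
  have pj: "p j < n" if "j < i" for j using p that i permutes_in_image[OF p, of j] by auto
  have "norm u \<le> (\<Sum>j<i. norm (G m (p j) (?X j) - G m (p j) x))"
    unfolding u_def by (rule norm_sum)
  then have "(norm u)\<^sup>2 \<le> (\<Sum>j<i. norm (G m (p j) (?X j) - G m (p j) x))\<^sup>2"
    by (simp add: power_mono)
  also have "\<dots> \<le> real i * (\<Sum>j<i. (norm (G m (p j) (?X j) - G m (p j) x))\<^sup>2)"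
    by (rule sq_sum_le)
  also have "\<dots> \<le> real i * (\<Sum>j<i. L\<^sup>2 * (norm (x - ?X j))\<^sup>2)"
  proof (intro mult_left_mono sum_mono)
    fix j assume "j \<in> {..<i}"
    then have "norm (G m (p j) (?X j) - G m (p j) x) \<le> L * norm (x - ?X j)"
      using sm[OF pj, of j "?X j" x] by (simp add: norm_minus_commute)
    then show "(norm (G m (p j) (?X j) - G m (p j) x))\<^sup>2 \<le> L\<^sup>2 * (norm (x - ?X j))\<^sup>2"
      by (metis norm_ge_zero power_mono power_mult_distrib)
  qed simp
  finally have u2: "(norm u)\<^sup>2 \<le> L\<^sup>2 * real i * (\<Sum>j<i. (norm (x - ?X j))\<^sup>2)"
    by (simp add: sum_distrib_left algebra_simps)
  have "(norm (x - ?X i))\<^sup>2 = \<gamma>\<^sup>2 * (norm (u + w))\<^sup>2" unfolding eq by (simp add: power_mult_distrib)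
  also have "\<dots> \<le> \<gamma>\<^sup>2 * (2 * (norm u)\<^sup>2 + 2 * (norm w)\<^sup>2)"
    by (intro mult_left_mono norm_add_sq) simp
  also have "\<dots> \<le> \<gamma>\<^sup>2 * (2 * (L\<^sup>2 * real i * (\<Sum>j<i. (norm (x - ?X j))\<^sup>2)) + 2 * (norm w)\<^sup>2)"
    using u2 by (intro mult_left_mono) auto
  finally show ?thesis unfolding w_def by (simp add: algebra_simps)
qed




lemma sum_i: "(\<Sum>i<n. real i) = real n * (real n - 1) / 2"
  by (induction n) (simp_all add: field_simps)

lemma sum_ii: "(\<Sum>i<n. real i * (real i - 1)) = real n * (real n - 1) * (real n - 2) / 3"
  by (induction n) (simp_all add: field_simps)

lemma per_m:
  fixes G :: "nat \<Rightarrow> nat \<Rightarrow> 'a::real_inner \<Rightarrow> 'a"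
  assumes sm: "\<And>a y z. a < n \<Longrightarrow> norm (G m a y - G m a z) \<le> L * norm (y - z)"
    and L: "L > 0" and g: "\<gamma> > 0" and gl: "\<gamma> \<le> 1 / (2 * L * real n)" and n2: "n \<ge> 2"
  shows "(\<Sum>i<n. perm_expect n (\<lambda>p. (norm (x - rr_iter G \<gamma> m p x i))\<^sup>2))
     \<le> 8 / 3 * \<gamma>\<^sup>2 * ((real n - 2) / 3 * (norm (\<Sum>a<n. G m a x))\<^sup>2
                     + (real n + 1) / 6 * (\<Sum>a<n. (norm (G m a x))\<^sup>2))"
proof -
  define P where "P = {p. p permutes {..<n}}"
  define N where "N = real (card P)"
  have finP: "finite P" unfolding P_def by (simp add: finite_permutations)
  have Npos: "N > 0" unfolding N_def P_def using card_permutations[of "{..<n}" n] by simp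
  define E where "E i = (\<Sum>p\<in>P. (norm (x - rr_iter G \<gamma> m p x i))\<^sup>2)" for i
  define W where "W i = (\<Sum>p\<in>P. (norm (\<Sum>j<i. G m (p j) x))\<^sup>2)" for i
  define S where "S = (\<Sum>i<n. E i)"
  define Q0 where "Q0 = (\<Sum>p\<in>P. G m (p 0) x \<bullet> G m (p 0) x)"
  define Q1 where "Q1 = (\<Sum>p\<in>P. G m (p 0) x \<bullet> G m (p 1) x)"
  define A where "A = (\<Sum>a<n. (norm (G m a x))\<^sup>2)"
  define s2 where "s2 = (norm (\<Sum>a<n. G m a x))\<^sup>2"
  have E0: "E i \<ge> 0" for i unfolding E_def by (intro sum_nonneg) simp
  have Ei: "E i \<le> 2 * \<gamma>\<^sup>2 * L\<^sup>2 * real i * (\<Sum>j<i. E j) + 2 * \<gamma>\<^sup>2 * W i" if i: "i \<le> n" for i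
  proof -
    have "E i \<le> (\<Sum>p\<in>P. 2 * \<gamma>\<^sup>2 * L\<^sup>2 * real i * (\<Sum>j<i. (norm (x - rr_iter G \<gamma> m p x j))\<^sup>2)
       + 2 * \<gamma>\<^sup>2 * (norm (\<Sum>j<i. G m (p j) x))\<^sup>2)"
      unfolding E_def using L i
      by (intro sum_mono det_bound[where G=G and m=m and n=n, OF sm]) (auto simp: P_def)
    also have "\<dots> = 2 * \<gamma>\<^sup>2 * L\<^sup>2 * real i * (\<Sum>j<i. E j) + 2 * \<gamma>\<^sup>2 * W i"
      unfolding E_def W_def
      by (simp add: sum.distrib sum_distrib_left sum.swap[of _ P "{..<i}"])
    finally show ?thesis .
  qed
  have "S \<le> (\<Sum>i<n. 2 * \<gamma>\<^sup>2 * L\<^sup>2 * real i * (\<Sum>j<i. E j) + 2 * \<gamma>\<^sup>2 * W i)"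
    unfolding S_def by (intro sum_mono Ei) simp
  also have "\<dots> \<le> (\<Sum>i<n. 2 * \<gamma>\<^sup>2 * L\<^sup>2 * real i * S + 2 * \<gamma>\<^sup>2 * W i)"
  proof (intro sum_mono add_right_mono mult_left_mono)
    fix i assume "i \<in> {..<n}"
    then show "(\<Sum>j<i. E j) \<le> S" unfolding S_def using E0
      by (intro sum_mono2) auto
  qed simp
  also have "\<dots> = \<gamma>\<^sup>2 * L\<^sup>2 * (real n * (real n - 1)) * S + 2 * \<gamma>\<^sup>2 * (\<Sum>i<n. W i)"
    by (simp add: sum.distrib sum_distrib_left[symmetric] sum_distrib_right[symmetric] sum_i
        algebra_simps) (simp add: field_simps)
  finally have S1: "S \<le> \<gamma>\<^sup>2 * L\<^sup>2 * (real n * (real n - 1)) * S + 2 * \<gamma>\<^sup>2 * (\<Sum>i<n. W i)" .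
  have "\<gamma> * (2 * L * real n) \<le> 1" using gl L n2 by (simp add: field_simps)
  then have gl2: "(\<gamma> * L * real n)\<^sup>2 \<le> 1 / 4"
  proof -
    have t0: "\<gamma> * L * real n \<ge> 0" using g L by simp
    have "\<gamma> * L * real n \<le> 1/2" using \<open>\<gamma> * (2 * L * real n) \<le> 1\<close> by (simp add: algebra_simps)
    then have "(\<gamma> * L * real n)\<^sup>2 \<le> (1/2)\<^sup>2" using t0 by (intro power_mono) auto
    then show ?thesis by (simp add: power2_eq_square)
  qed
  have S0: "S \<ge> 0" unfolding S_def using E0 by (simp add: sum_nonneg)
  have "\<gamma>\<^sup>2 * L\<^sup>2 * (real n * (real n - 1)) * S \<le> (\<gamma> * L * real n)\<^sup>2 * S"
    using S0 g L by (intro mult_right_mono) (auto simp: power2_eq_square algebra_simps)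
  also have "\<dots> \<le> 1/4 * S" using S0 gl2 by (intro mult_right_mono) auto
  finally have S2: "S \<le> 8 / 3 * \<gamma>\<^sup>2 * (\<Sum>i<n. W i)" using S1 by linarith
  have Wi: "W i = real i * Q0 + real i * (real i - 1) * Q1" if "i \<le> n" for i
    unfolding W_def Q0_def Q1_def P_def using var_formula[OF that, of "\<lambda>a. G m a x"] by simp
  have sumW: "(\<Sum>i<n. W i) = real n * (real n - 1) / 2 * Q0 + real n * (real n - 1) * (real n - 2) / 3 * Q1"
  proof -
    have "(\<Sum>i<n. W i) = (\<Sum>i<n. real i * Q0 + real i * (real i - 1) * Q1)"
      by (intro sum.cong refl Wi) simp
    also have "\<dots> = (\<Sum>i<n. real i) * Q0 + (\<Sum>i<n. real i * (real i - 1)) * Q1"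
      by (simp add: sum.distrib sum_distrib_right)
    finally show ?thesis by (simp add: sum_i sum_ii)
  qed
  have hQ0: "real n * Q0 = N * A"
    unfolding Q0_def N_def A_def P_def by (rule var_Q0)
  have hQ1: "real n * Q0 + real n * (real n - 1) * Q1 = N * s2"
    using Wi[of n] var_full[of "\<lambda>a. G m a x" n] unfolding W_def s2_def N_def P_def
    by (simp add: algebra_simps)
  have "(\<Sum>i<n. W i) = (real n - 1) / 2 * (real n * Q0) + (real n - 2) / 3 * (real n * (real n - 1) * Q1)"
    unfolding sumW by (simp add: field_simps)
  also have "\<dots> = N * ((real n - 2) / 3 * s2 + (real n + 1) / 6 * A)"
  proof -
    have R: "real n * (real n - 1) * Q1 = N * s2 - N * A" using hQ0 hQ1 by linarith
    show ?thesis unfolding hQ0 R by (simp add: field_simps)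
  qed
  finally have sumW2: "(\<Sum>i<n. W i) = N * ((real n - 2) / 3 * s2 + (real n + 1) / 6 * A)" .
  have "(\<Sum>i<n. perm_expect n (\<lambda>p. (norm (x - rr_iter G \<gamma> m p x i))\<^sup>2)) = S / N"
    unfolding perm_expect_def S_def E_def N_def P_def by (simp add: sum_divide_distrib)
  also have "\<dots> \<le> 8 / 3 * \<gamma>\<^sup>2 * ((real n - 2) / 3 * s2 + (real n + 1) / 6 * A)"
    using S2 Npos unfolding sumW2 by (simp add: field_simps)
  finally show ?thesis unfolding s2_def A_def .
qed




lemma quad1:
  fixes a :: real assumes "a \<ge> 2"
  shows "16 / 9 * a * (a - 2) + 8 / 9 * (a + 1) \<le> 4 * a\<^sup>2"
    and "16 / 9 * a * (a - 2) \<le> 2 * a\<^sup>2"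
proof -
  have h: "a * a \<ge> 2 * a" using assms by (intro mult_right_mono) auto
  have e1: "16 / 9 * a * (a - 2) + 8 / 9 * (a + 1) = 16/9*(a*a) - 24/9*a + 8/9" by (simp add: field_simps)
  have e2: "16 / 9 * a * (a - 2) = 16/9*(a*a) - 32/9*a" by (simp add: field_simps)
  show "16 / 9 * a * (a - 2) + 8 / 9 * (a + 1) \<le> 4 * a\<^sup>2"
    unfolding e1 power2_eq_square using h assms by linarith
  show "16 / 9 * a * (a - 2) \<le> 2 * a\<^sup>2"
    unfolding e2 power2_eq_square using h assms by linarith
qed

lemma alg:
  fixes a b K X Y :: real
  assumes "b > 0" "a > 0"
  shows "((16 / 3 * K * ((a - 2) / 3 * a\<^sup>2)) * (b * X) + (16 / 3 * K * ((a + 1) / 6)) * (a * b * Y)) / (b * a)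
    = K * (16 / 9 * a * (a - 2) * X + 8 / 9 * (a + 1) * Y)"
  using assms by (simp add: field_simps power2_eq_square)

theorem mainTheorem8:
  fixes f :: "nat \<Rightarrow> nat \<Rightarrow> 'a::euclidean_space \<Rightarrow> real"
    and G :: "nat \<Rightarrow> nat \<Rightarrow> 'a \<Rightarrow> 'a"
    and M n :: nat and L \<gamma> :: real and x :: 'a
  assumes M_pos: "M \<ge> 1" and n_pos: "n \<ge> 1"
    and L_pos: "L > 0" and \<gamma>_pos: "\<gamma> > 0"
    and \<gamma>_le: "\<gamma> \<le> 1 / (2 * L * real n)"
    and grad: "\<And>m i y. m \<in> {1..M} \<Longrightarrow> i \<in> {..<n} \<Longrightarrow>
                 (f m i has_derivative (\<lambda>h. G m i y \<bullet> h)) (at y)"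
    and smooth: "\<And>m i y z. m \<in> {1..M} \<Longrightarrow> i \<in> {..<n} \<Longrightarrow>
                 norm (G m i y - G m i z) \<le> L * norm (y - z)"
    and fin_i: "\<And>m i. m \<in> {1..M} \<Longrightarrow> i \<in> {..<n} \<Longrightarrow> bdd_below (range (f m i))"
    and fin_m: "\<And>m. m \<in> {1..M} \<Longrightarrow>
                 bdd_below (range (\<lambda>y. (\<Sum>i<n. f m i y) / real n))"
    and fin: "bdd_below (range (\<lambda>y. (\<Sum>m=1..M. (\<Sum>i<n. f m i y) / real n) / real M))"
  shows
   "(let fm = (\<lambda>m y. (\<Sum>i<n. f m i y) / real n);
         F = (\<lambda>y. (\<Sum>m=1..M. fm m y) / real M);
         Fstar = (INF y. F y);
         fstar_m = (\<lambda>m. INF y. fm m y);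
         fstar_mi = (\<lambda>m i. INF y. f m i y);
         Delta_star = Fstar - (\<Sum>m=1..M. fstar_m m) / real M;
         Delta_star_m = (\<lambda>m. Fstar - (\<Sum>i<n. fstar_mi m i) / real n)
     in (\<Sum>m=1..M. \<Sum>i<n.
            perm_expect n (\<lambda>p. (norm (x - rr_iter G \<gamma> m p x i))\<^sup>2)) / (real M * real n)
        \<le> 4 * \<gamma>\<^sup>2 * (real n)\<^sup>2 * L * (F x - Fstar)
          + 2 * \<gamma>\<^sup>2 * (real n)\<^sup>2 * L * Delta_star
          + 2 * \<gamma>\<^sup>2 * real n * L * ((\<Sum>m=1..M. Delta_star_m m) / real M))"
proof -
  define fm where "fm = (\<lambda>m y. (\<Sum>i<n. f m i y) / real n)"
  define F where "F = (\<lambda>y. (\<Sum>m=1..M. fm m y) / real M)"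
  define Fstar where "Fstar = (INF y. F y)"
  define fstar_m where "fstar_m = (\<lambda>m. INF y. fm m y)"
  define fstar_mi where "fstar_mi = (\<lambda>m i. INF y. f m i y)"
  define D2 where "D2 = Fstar - (\<Sum>m=1..M. fstar_m m) / real M"
  define Dm where "Dm = (\<lambda>m. Fstar - (\<Sum>i<n. fstar_mi m i) / real n)"
  define D1 where "D1 = F x - Fstar"
  define D3 where "D3 = (\<Sum>m=1..M. Dm m) / real M"
  define LHS where "LHS = (\<Sum>m=1..M. \<Sum>i<n.
            perm_expect n (\<lambda>p. (norm (x - rr_iter G \<gamma> m p x i))\<^sup>2)) / (real M * real n)"
  have Mpos: "real M > 0" using M_pos by simp
  have npos: "real n > 0" using n_pos by simp
  have finF: "bdd_below (range F)" using fin unfolding F_def fm_def by simp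
  have finm: "bdd_below (range (fm m))" if "m \<in> {1..M}" for m
    using fin_m[OF that] unfolding fm_def by simp
  have fmi_le: "fstar_mi m i \<le> f m i y" if "m \<in> {1..M}" "i < n" for m i y
    unfolding fstar_mi_def using fin_i[of m i] that by (intro cINF_lower) auto
  have fm_le: "fstar_m m \<le> fm m y" if "m \<in> {1..M}" for m y
    unfolding fstar_m_def using finm[OF that] by (intro cINF_lower) auto
  have D1: "D1 \<ge> 0" unfolding D1_def Fstar_def using finF by (simp add: cINF_lower)
  have D2: "D2 \<ge> 0"
  proof -
    have "(\<Sum>m=1..M. fstar_m m) / real M \<le> Fstar" unfolding Fstar_def
    proof (rule cINF_greatest)
      fix y show "(\<Sum>m=1..M. fstar_m m) / real M \<le> F y" unfolding F_def
        using Mpos by (intro divide_right_mono sum_mono fm_le) auto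
    qed simp
    then show ?thesis unfolding D2_def by simp
  qed
  have D3: "D3 \<ge> 0"
  proof -
    have "(\<Sum>m=1..M. (\<Sum>i<n. fstar_mi m i) / real n) / real M \<le> Fstar" unfolding Fstar_def
    proof (rule cINF_greatest)
      fix y show "(\<Sum>m=1..M. (\<Sum>i<n. fstar_mi m i) / real n) / real M \<le> F y" unfolding F_def fm_def
        using Mpos npos by (intro divide_right_mono sum_mono fmi_le) auto
    qed simp
    moreover have "D3 = Fstar - (\<Sum>m=1..M. (\<Sum>i<n. fstar_mi m i) / real n) / real M"
      unfolding D3_def Dm_def using Mpos by (simp add: sum_subtractf field_simps)
    ultimately show ?thesis by simp
  qed
  have key: "LHS \<le> 4 * \<gamma>\<^sup>2 * (real n)\<^sup>2 * L * D1 + 2 * \<gamma>\<^sup>2 * (real n)\<^sup>2 * L * D2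
          + 2 * \<gamma>\<^sup>2 * real n * L * D3"
  proof (cases "n = 1")
    case True
    then have "LHS = 0" unfolding LHS_def perm_expect_def by simp
    then show ?thesis using D1 D2 D3 L_pos by simp
  next
    case False
    then have n2: "n \<ge> 2" using n_pos by simp
    define B where "B m = fm m x - fstar_m m" for m
    define C where "C m = (\<Sum>a<n. f m a x - fstar_mi m a)" for m
    have desc: "f m a (x + v) \<le> f m a x + G m a x \<bullet> v + L / 2 * (norm v)\<^sup>2"
      if "m \<in> {1..M}" "a < n" for m a v
      using descent[of "f m a" "G m a" L x v] grad[of m a] smooth[of m a] that by auto
    have bnd: "(\<Sum>i<n. perm_expect n (\<lambda>p. (norm (x - rr_iter G \<gamma> m p x i))\<^sup>2))
        \<le> 8 / 3 * \<gamma>\<^sup>2 * ((real n - 2) / 3 * (2 * L * (real n)\<^sup>2 * B m) + (real n + 1) / 6 * (2 * L * C m))"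
      if m: "m \<in> {1..M}" for m
    proof -
      define s where "s = (\<Sum>a<n. G m a x)"
      have pm: "(\<Sum>i<n. perm_expect n (\<lambda>p. (norm (x - rr_iter G \<gamma> m p x i))\<^sup>2))
        \<le> 8 / 3 * \<gamma>\<^sup>2 * ((real n - 2) / 3 * (norm s)\<^sup>2 + (real n + 1) / 6 * (\<Sum>a<n. (norm (G m a x))\<^sup>2))"
        unfolding s_def using smooth[OF m] L_pos \<gamma>_pos \<gamma>_le n2 by (intro per_m) auto
      have A: "(\<Sum>a<n. (norm (G m a x))\<^sup>2) \<le> 2 * L * C m"
        unfolding C_def sum_distrib_left
      proof (rule sum_mono)
        fix a assume a: "a \<in> {..<n}"
        show "(norm (G m a x))\<^sup>2 \<le> 2 * L * (f m a x - fstar_mi m a)"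
          unfolding fstar_mi_def using desc[OF m] a fin_i[OF m a] L_pos
          by (intro grad_bound) auto
      qed
      have dfm: "fm m (x + v) \<le> fm m x + (s /\<^sub>R real n) \<bullet> v + L / 2 * (norm v)\<^sup>2" for v
      proof -
        have "(\<Sum>a<n. f m a (x + v)) \<le> (\<Sum>a<n. f m a x + G m a x \<bullet> v + L / 2 * (norm v)\<^sup>2)"
          using desc[OF m] by (intro sum_mono) auto
        also have "\<dots> = (\<Sum>a<n. f m a x) + s \<bullet> v + real n * (L / 2 * (norm v)\<^sup>2)"
          unfolding s_def by (simp add: sum.distrib inner_sum_left)
        finally show ?thesis unfolding fm_def using npos
          by (simp add: field_simps inner_scaleR_left)
      qed
      have "(norm (s /\<^sub>R real n))\<^sup>2 \<le> 2 * L * (fm m x - (INF y. fm m y))"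
        using dfm finm[OF m] L_pos by (intro grad_bound) auto
      then have "(norm s)\<^sup>2 / (real n)\<^sup>2 \<le> 2 * L * B m"
        unfolding B_def fstar_m_def using npos by (simp add: power_divide power_mult_distrib divide_inverse mult.commute power_inverse)
      then have S: "(norm s)\<^sup>2 \<le> 2 * L * (real n)\<^sup>2 * B m" using npos
        by (simp add: field_simps)
      have n20: "(real n - 2) / 3 \<ge> 0" using n2 by simp
      have "8 / 3 * \<gamma>\<^sup>2 * ((real n - 2) / 3 * (norm s)\<^sup>2 + (real n + 1) / 6 * (\<Sum>a<n. (norm (G m a x))\<^sup>2))
         \<le> 8 / 3 * \<gamma>\<^sup>2 * ((real n - 2) / 3 * (2 * L * (real n)\<^sup>2 * B m) + (real n + 1) / 6 * (2 * L * C m))"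
        using S A n20 by (intro mult_left_mono add_mono mult_left_mono) auto
      with pm show ?thesis by linarith
    qed
    have SB: "(\<Sum>m=1..M. B m) = real M * (D1 + D2)"
      unfolding B_def D1_def D2_def F_def using Mpos by (simp add: sum_subtractf field_simps)
    have SC: "(\<Sum>m=1..M. C m) = real n * real M * (D1 + D3)"
    proof -
      have "C m = real n * fm m x - (\<Sum>a<n. fstar_mi m a)" for m
        unfolding C_def fm_def using npos by (simp add: sum_subtractf)
      then have "(\<Sum>m=1..M. C m) = real n * (\<Sum>m=1..M. fm m x) - (\<Sum>m=1..M. \<Sum>a<n. fstar_mi m a)"
        by (simp add: sum_subtractf sum_distrib_left)
      moreover have "real n * real M * D3 = real n * real M * Fstar - (\<Sum>m=1..M. \<Sum>a<n. fstar_mi m a)"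
        unfolding D3_def Dm_def using Mpos npos
        by (simp add: sum_subtractf sum_divide_distrib[symmetric] field_simps)
      moreover have "real n * real M * F x = real n * (\<Sum>m=1..M. fm m x)" unfolding F_def using Mpos by simp
      moreover have "real n * real M * (D1 + D3) = real n * real M * F x - real n * real M * Fstar + real n * real M * D3"
        unfolding D1_def by (simp add: algebra_simps)
      ultimately show ?thesis by linarith
    qed
    define K where "K = \<gamma>\<^sup>2 * L"
    have K: "K > 0" unfolding K_def using \<gamma>_pos L_pos by simp
    have "LHS \<le> (\<Sum>m=1..M. 8 / 3 * \<gamma>\<^sup>2 * ((real n - 2) / 3 * (2 * L * (real n)\<^sup>2 * B m)
                 + (real n + 1) / 6 * (2 * L * C m))) / (real M * real n)"
      unfolding LHS_def using Mpos npos by (intro divide_right_mono sum_mono bnd) auto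
    also have "\<dots> = ((16 / 3 * K * ((real n - 2) / 3 * (real n)\<^sup>2)) * (\<Sum>m=1..M. B m)
                 + (16 / 3 * K * ((real n + 1) / 6)) * (\<Sum>m=1..M. C m)) / (real M * real n)"
    proof -
      have "(\<Sum>m=1..M. 8 / 3 * \<gamma>\<^sup>2 * ((real n - 2) / 3 * (2 * L * (real n)\<^sup>2 * B m)
                 + (real n + 1) / 6 * (2 * L * C m)))
         = (\<Sum>m=1..M. (16 / 3 * K * ((real n - 2) / 3 * (real n)\<^sup>2)) * B m
                 + (16 / 3 * K * ((real n + 1) / 6)) * C m)"
        unfolding K_def by (intro sum.cong refl) (simp add: algebra_simps)
      also have "\<dots> = (16 / 3 * K * ((real n - 2) / 3 * (real n)\<^sup>2)) * (\<Sum>m=1..M. B m)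
                 + (16 / 3 * K * ((real n + 1) / 6)) * (\<Sum>m=1..M. C m)"
        by (simp add: sum.distrib sum_distrib_left)
      finally show ?thesis by simp
    qed
    also have "\<dots> = K * (16 / 9 * real n * (real n - 2) * (D1 + D2) + 8 / 9 * (real n + 1) * (D1 + D3))"
      unfolding SB SC using alg[OF Mpos npos] by simp
    also have "\<dots> \<le> K * (4 * (real n)\<^sup>2 * D1 + 2 * (real n)\<^sup>2 * D2 + 2 * real n * D3)"
    proof (rule mult_left_mono)
      have nn: "real n * real n \<ge> 2 * real n" using n2 by (intro mult_right_mono) auto
      have c1: "16 / 9 * real n * (real n - 2) + 8 / 9 * (real n + 1) \<le> 4 * (real n)\<^sup>2"
        using quad1(1)[of "real n"] n2 by simp
      have c2: "16 / 9 * real n * (real n - 2) \<le> 2 * (real n)\<^sup>2"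
        using quad1(2)[of "real n"] n2 by simp
      have c3: "8 / 9 * (real n + 1) \<le> 2 * real n" using n2 by simp
      have m1: "(16 / 9 * real n * (real n - 2) + 8 / 9 * (real n + 1)) * D1 \<le> 4 * (real n)\<^sup>2 * D1"
        using c1 D1 by (rule mult_right_mono)
      moreover have m2: "16 / 9 * real n * (real n - 2) * D2 \<le> 2 * (real n)\<^sup>2 * D2"
        using c2 D2 by (rule mult_right_mono)
      moreover have m3: "8 / 9 * (real n + 1) * D3 \<le> 2 * real n * D3"
        using c3 D3 by (rule mult_right_mono)
      ultimately show "16 / 9 * real n * (real n - 2) * (D1 + D2) + 8 / 9 * (real n + 1) * (D1 + D3)
          \<le> 4 * (real n)\<^sup>2 * D1 + 2 * (real n)\<^sup>2 * D2 + 2 * real n * D3"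
      proof -
        have "16 / 9 * real n * (real n - 2) * (D1 + D2) + 8 / 9 * (real n + 1) * (D1 + D3)
          = (16 / 9 * real n * (real n - 2) + 8 / 9 * (real n + 1)) * D1
            + 16 / 9 * real n * (real n - 2) * D2 + 8 / 9 * (real n + 1) * D3"
          by (simp add: field_simps)
        with m1 m2 m3 show ?thesis by linarith
      qed
    qed (use K in simp)
    finally show ?thesis unfolding K_def by (simp add: algebra_simps)
  qed
  show ?thesis
    using key unfolding Let_def LHS_def D1_def D2_def D3_def Dm_def Fstar_def F_def fm_def
      fstar_m_def fstar_mi_def by simp
qed


end
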